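(* Let $n\geq 2$ and $m\in\{1,\ldots,n-1\}$. Let $x_1,\ldots,x_n$ be distinct real numbers and $y_1,\ldots,y_n$ be distinct real numbers, and let $S^{\circ m}=[(1+x_iy_j)^m]_{i,j=1}^n$. Let $D_m$ be the $n\times n$ diagonal matrix with diagonal entries $\binom{m}{0},\binom{m}{1},\ldots,\binom{m}{m},0,\ldots,0$ (i.e. $(D_m)_{kk}=\binom{m}{k-1}$ for $1\leq k\leq m+1$ and $(D_m)_{kk}=0$ for $m+2\leq k\leq n$). Then \[ S^{\circ m}=\Big(L^{\mathbf x(1)}\cdots L^{\mathbf x(n-1)}U^{\mathbf x(n-1)}\cdots U^{\mathbf x(1)}\Big)\,D_m\,\Big(L^{\mathbf y(1)}\cdots L^{\mathbf y(n-1)}U^{\mathbf y(n-1)}\cdots U^{\mathbf y(1)}\Big)^T. \]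
   Context: For distinct real numbers $x_1,\ldots,x_n$ and $1\leq k\leq n-1$, the $n\times n$ lower bidiagonal matrix $L^{\mathbf x(k)}$ and upper bidiagonal matrix $U^{\mathbf x(k)}$ are defined by \[ (L^{\mathbf x(k)})_{ij}=\begin{cases} 1 & \text{if } i=j,\\ 1 & \text{if } i=j+1,\ i=n-k+1,\\ \displaystyle\prod_{t=0}^{k-n+i-2}\frac{x_i-x_{i-1-t}}{x_{i-1}-x_{i-2-t}} & \text{if } i=j+1,\ i>n-k+1,\\ 0 & \text{otherwise}, \end{cases} \] \[ (U^{\mathbf x(k)})_{ij}=\begin{cases} 1 & \text{if } i=j,\ i\leq n-k,\\ x_i-x_{n-k} & \text{if } i=j,\ i>n-k,\\ x_1 & \text{if } i=j-1,\ i=n-k,\\ \displaystyle x_{k-n+i+1}\prod_{t=1}^{k-n+i}\frac{x_i-x_{i-t}}{x_{i+1}-x_{i+1-t}} & \text{if } i=j-1,\ i>n-k,\\ 0 & \text{otherwise}. \end{cases} \] $L^{\mathbf y(k)}$ and $U^{\mathbf y(k)}$ are defined in the same way with $y_1,\ldots,y_n$ in place of $x_1,\ldots,x_n$. $A^T$ denotes the transpose. *)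

theory Defs
  imports "Jordan_Normal_Form.Matrix"
begin

text \<open>The vectors x, y are functions nat => real, used on the
1-based index range {1..n}, as in the paper.  In the definitions below,
i = i0 + 1 and j = j0 + 1 are the paper's 1-based row/column indices.\<close>

definition Lmat :: "nat \<Rightarrow> (nat \<Rightarrow> real) \<Rightarrow> nat \<Rightarrow> real mat" where
  "Lmat n x k = mat n n (\<lambda>(i0, j0).
     let i = i0 + 1; j = j0 + 1 in
     if i = j then 1
     else if i = j + 1 \<and> i = n - k + 1 then 1
     else if i = j + 1 \<and> i > n - k + 1 then
       (\<Prod>t = 0..(k + i) - (n + 2). (x i - x (i - 1 - t)) / (x (i - 1) - x (i - 2 - t)))
     else 0)"

definition Umat :: "nat \<Rightarrow> (nat \<Rightarrow> real) \<Rightarrow> nat \<Rightarrow> real mat" where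
  "Umat n x k = mat n n (\<lambda>(i0, j0).
     let i = i0 + 1; j = j0 + 1 in
     if i = j \<and> i \<le> n - k then 1
     else if i = j \<and> i > n - k then x i - x (n - k)
     else if i + 1 = j \<and> i = n - k then x 1
     else if i + 1 = j \<and> i > n - k then
       x ((k + i + 1) - n) * (\<Prod>t = 1..(k + i) - n. (x i - x (i - t)) / (x (i + 1) - x (i + 1 - t)))
     else 0)"

definition LU_prod :: "nat \<Rightarrow> (nat \<Rightarrow> real) \<Rightarrow> real mat" where
  "LU_prod n x =
     foldr (\<lambda>k M. Lmat n x k * M) [1..<n]
       (foldr (\<lambda>k M. Umat n x k * M) (rev [1..<n]) (1\<^sub>m n))"

definition Spow :: "nat \<Rightarrow> nat \<Rightarrow> (nat \<Rightarrow> real) \<Rightarrow> (nat \<Rightarrow> real) \<Rightarrow> real mat" where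
  "Spow n m x y = mat n n (\<lambda>(i0, j0). (1 + x (i0 + 1) * y (j0 + 1)) ^ m)"

definition Dmat :: "nat \<Rightarrow> nat \<Rightarrow> real mat" where
  "Dmat n m = mat n n (\<lambda>(i0, j0). if i0 = j0 \<and> i0 \<le> m then real (m choose i0) else 0)"

end

theory Submission
  imports Defs
begin
definition shiftx :: "(nat \<Rightarrow> real) \<Rightarrow> nat \<Rightarrow> real" where
  "shiftx x i = x (Suc i)"

definition diag1 :: "real mat \<Rightarrow> real mat" where
  "diag1 A = mat (Suc (dim_row A)) (Suc (dim_col A))
     (\<lambda>(i,j). if i = 0 \<and> j = 0 then 1 else if i = 0 \<or> j = 0 then 0 else A $$ (i-1, j-1))"

lemma diag1_carrier[simp]: "A \<in> carrier_mat n n \<Longrightarrow> diag1 A \<in> carrier_mat (Suc n) (Suc n)"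
  by (auto simp: diag1_def)

lemma dim_diag1[simp]: "dim_row (diag1 A) = Suc (dim_row A)" "dim_col (diag1 A) = Suc (dim_col A)"
  by (auto simp: diag1_def)

lemma mult_entry:
  assumes "A \<in> carrier_mat n k" "B \<in> carrier_mat k m" "i < n" "j < m"
  shows "(A * B) $$ (i,j) = (\<Sum>l<k. A $$ (i,l) * B $$ (l,j))"
  using assms by (auto simp: index_mult_mat scalar_prod_def atLeast0LessThan intro!: sum.cong)

lemma diag1_mult:
  assumes "A \<in> carrier_mat n n" "B \<in> carrier_mat n n"
  shows "diag1 (A * B) = diag1 A * diag1 B"
proof (rule eq_matI)
  fix i j assume ij: "i < dim_row (diag1 A * diag1 B)" "j < dim_col (diag1 A * diag1 B)"
  then have ij': "i < Suc n" "j < Suc n" using assms by auto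
  have "(diag1 A * diag1 B) $$ (i,j) = (\<Sum>l<Suc n. diag1 A $$ (i,l) * diag1 B $$ (l,j))"
    using assms ij' by (intro mult_entry) auto
  also have "\<dots> = diag1 A $$ (i,0) * diag1 B $$ (0,j) + (\<Sum>l<n. diag1 A $$ (i,Suc l) * diag1 B $$ (Suc l,j))"
    by (simp only: sum.lessThan_Suc_shift)
  also have "\<dots> = diag1 (A * B) $$ (i,j)"
    using assms ij' by (cases i; cases j) (auto simp: diag1_def mult_entry[of A n n B n] simp del: index_mult_mat(1))
  finally show "diag1 (A * B) $$ (i, j) = (diag1 A * diag1 B) $$ (i, j)" by simp
qed (use assms in auto)

lemma diag1_one: "diag1 (1\<^sub>m n) = 1\<^sub>m (Suc n)"
  by (rule eq_matI) (auto simp: diag1_def)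

lemma foldr_carrier:
  assumes "\<And>k. k \<in> set ks \<Longrightarrow> A k \<in> carrier_mat n n" "B \<in> carrier_mat n n"
  shows "foldr (\<lambda>k M. A k * M) ks B \<in> carrier_mat n n"
  using assms by (induction ks) (auto intro!: mult_carrier_mat)

lemma foldr_mult:
  fixes A :: "nat \<Rightarrow> real mat"
  assumes "\<And>k. k \<in> set ks \<Longrightarrow> A k \<in> carrier_mat n n" "B \<in> carrier_mat n n"
  shows "foldr (\<lambda>k M. A k * M) ks B = foldr (\<lambda>k M. A k * M) ks (1\<^sub>m n) * B"
  using assms
proof (induction ks)
  case Nil then show ?case by (simp add: left_mult_one_mat[symmetric])
next
  case (Cons a ks)
  have c: "foldr (\<lambda>k M. A k * M) ks (1\<^sub>m n) \<in> carrier_mat n n"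
    using Cons by (intro foldr_carrier) auto
  have "foldr (\<lambda>k M. A k * M) (a # ks) B = A a * (foldr (\<lambda>k M. A k * M) ks (1\<^sub>m n) * B)"
    using Cons by simp
  also have "\<dots> = A a * foldr (\<lambda>k M. A k * M) ks (1\<^sub>m n) * B"
    using Cons c by (intro assoc_mult_mat[symmetric]) auto
  finally show ?case by simp
qed

lemma foldr_diag1:
  assumes "\<And>k. k \<in> set ks \<Longrightarrow> A k = diag1 (B k)" "\<And>k. k \<in> set ks \<Longrightarrow> B k \<in> carrier_mat n n"
    "C \<in> carrier_mat n n"
  shows "foldr (\<lambda>k M. A k * M) ks (diag1 C) = diag1 (foldr (\<lambda>k M. B k * M) ks C)"
  using assms
proof (induction ks)
  case Nil then show ?case by simp
next
  case (Cons a ks)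
  have c: "foldr (\<lambda>k M. B k * M) ks C \<in> carrier_mat n n"
    using Cons by (intro foldr_carrier) auto
  have "foldr (\<lambda>k M. A k * M) (a # ks) (diag1 C) = diag1 (B a) * diag1 (foldr (\<lambda>k M. B k * M) ks C)"
    using Cons by simp
  also have "\<dots> = diag1 (B a * foldr (\<lambda>k M. B k * M) ks C)"
    using Cons c by (intro diag1_mult[symmetric]) auto
  finally show ?case by simp
qed


definition Umz :: "nat \<Rightarrow> (nat \<Rightarrow> real) \<Rightarrow> (nat \<Rightarrow> real) \<Rightarrow> nat \<Rightarrow> real mat" where
  "Umz n x z k = mat n n (\<lambda>(i0, j0).
     let i = i0 + 1; j = j0 + 1 in
     if i = j \<and> i \<le> n - k then 1
     else if i = j \<and> i > n - k then x i - x (n - k)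
     else if i + 1 = j \<and> i = n - k then z 1
     else if i + 1 = j \<and> i > n - k then
       z ((k + i + 1) - n) * (\<Prod>t = 1..(k + i) - n. (x i - x (i - t)) / (x (i + 1) - x (i + 1 - t)))
     else 0)"

lemma Umat_Umz: "Umat n x k = Umz n x x k"
  by (simp add: Umat_def Umz_def)

lemma Lmat_carrier[simp]: "Lmat n x k \<in> carrier_mat n n"
  by (simp add: Lmat_def)

lemma Umz_carrier[simp]: "Umz n x z k \<in> carrier_mat n n"
  by (simp add: Umz_def)

lemma Lmat_shift:
  assumes "1 \<le> k" "k < n"
  shows "Lmat (Suc n) x k = diag1 (Lmat n (shiftx x) k)"
proof (rule eq_matI)
  fix i j assume "i < dim_row (diag1 (Lmat n (shiftx x) k))" "j < dim_col (diag1 (Lmat n (shiftx x) k))"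
  then have ij: "i < Suc n" "j < Suc n" by (auto simp: Lmat_def)
  show "Lmat (Suc n) x k $$ (i, j) = diag1 (Lmat n (shiftx x) k) $$ (i, j)"
  proof (cases "i = 0 \<or> j = 0")
    case True
    then show ?thesis using ij assms by (auto simp: Lmat_def diag1_def Let_def)
  next
    case False
    then obtain i' j' where ij': "i = Suc i'" "j = Suc j'" by (meson not0_implies_Suc)
    have P: "(\<Prod>t = 0..k + (Suc i) - (Suc n + 2). (x (Suc i) - x (Suc i - 1 - t)) / (x (Suc i - 1) - x (Suc i - 2 - t)))
       = (\<Prod>t = 0..k + i - (n + 2). (shiftx x i - shiftx x (i - 1 - t)) / (shiftx x (i - 1) - shiftx x (i - 2 - t)))"
      if "i > n - k + 1"
    proof (rule prod.cong)
      fix t assume "t \<in> {0..k + i - (n + 2)}"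
      then have "Suc i - 1 - t = Suc (i - 1 - t)" "Suc i - 2 - t = Suc (i - 2 - t)" using that assms by auto
      then show "(x (Suc i) - x (Suc i - 1 - t)) / (x (Suc i - 1) - x (Suc i - 2 - t)) =
        (shiftx x i - shiftx x (i - 1 - t)) / (shiftx x (i - 1) - shiftx x (i - 2 - t))"
        using that assms by (simp add: shiftx_def)
    qed simp
    show ?thesis using ij ij' assms P by (auto simp: Lmat_def diag1_def Let_def)
  qed
qed (auto simp: Lmat_def)

lemma Umz_shift:
  assumes "1 \<le> k" "k < n"
  shows "Umz (Suc n) x z k = diag1 (Umz n (shiftx x) z k)"
proof (rule eq_matI)
  fix i j assume "i < dim_row (diag1 (Umz n (shiftx x) z k))" "j < dim_col (diag1 (Umz n (shiftx x) z k))"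
  then have ij: "i < Suc n" "j < Suc n" by (auto simp: Umz_def)
  show "Umz (Suc n) x z k $$ (i, j) = diag1 (Umz n (shiftx x) z k) $$ (i, j)"
  proof (cases "i = 0 \<or> j = 0")
    case True
    then show ?thesis using ij assms by (auto simp: Umz_def diag1_def Let_def)
  next
    case False
    then obtain i' j' where ij': "i = Suc i'" "j = Suc j'" by (meson not0_implies_Suc)
    have P: "(\<Prod>t = 1..k + Suc i - Suc n. (x (Suc i) - x (Suc i - t)) / (x (Suc i + 1) - x (Suc i + 1 - t)))
       = (\<Prod>t = 1..k + i - n. (shiftx x i - shiftx x (i - t)) / (shiftx x (i + 1) - shiftx x (i + 1 - t)))"
      if "i > n - k"
      using that assms ij' by (intro prod.cong) (auto simp: shiftx_def Suc_diff_le)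
    show ?thesis using ij ij' assms P by (auto simp: Umz_def diag1_def Let_def shiftx_def Suc_diff_le)
  qed
qed (auto simp: Umz_def)

definition Lprod :: "nat \<Rightarrow> (nat \<Rightarrow> real) \<Rightarrow> real mat" where
  "Lprod n x = foldr (\<lambda>k M. Lmat n x k * M) [1..<n] (1\<^sub>m n)"

definition Uprod :: "nat \<Rightarrow> (nat \<Rightarrow> real) \<Rightarrow> (nat \<Rightarrow> real) \<Rightarrow> real mat" where
  "Uprod n x z = foldr (\<lambda>k M. Umz n x z k * M) (rev [1..<n]) (1\<^sub>m n)"

lemma Lprod_carrier[simp]: "Lprod n x \<in> carrier_mat n n"
  unfolding Lprod_def by (rule foldr_carrier) auto

lemma Uprod_carrier[simp]: "Uprod n x z \<in> carrier_mat n n"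
  unfolding Uprod_def by (rule foldr_carrier) auto

lemma LU_prod_split: "LU_prod n x = Lprod n x * Uprod n x x"
proof -
  have "LU_prod n x = foldr (\<lambda>k M. Lmat n x k * M) [1..<n] (Uprod n x x)"
    by (simp add: LU_prod_def Uprod_def Umat_Umz)
  also have "\<dots> = Lprod n x * Uprod n x x"
    unfolding Lprod_def by (rule foldr_mult) auto
  finally show ?thesis .
qed

lemma Lprod_Suc:
  assumes "1 \<le> n"
  shows "Lprod (Suc n) x = diag1 (Lprod n (shiftx x)) * Lmat (Suc n) x n"
proof -
  have "[1..<Suc n] = [1..<n] @ [n]" using assms by simp
  then have "Lprod (Suc n) x = foldr (\<lambda>k M. Lmat (Suc n) x k * M) [1..<n] (Lmat (Suc n) x n)"
    by (simp add: Lprod_def right_mult_one_mat[of _ "Suc n" "Suc n"])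
  also have "\<dots> = foldr (\<lambda>k M. Lmat (Suc n) x k * M) [1..<n] (diag1 (1\<^sub>m n)) * Lmat (Suc n) x n"
    by (subst foldr_mult[of _ _ "Suc n"]) (auto simp: diag1_one)
  also have "foldr (\<lambda>k M. Lmat (Suc n) x k * M) [1..<n] (diag1 (1\<^sub>m n)) = diag1 (Lprod n (shiftx x))"
    unfolding Lprod_def by (rule foldr_diag1[of _ _ _ n]) (auto simp: Lmat_shift)
  finally show ?thesis .
qed

lemma Uprod_Suc:
  assumes "1 \<le> n"
  shows "Uprod (Suc n) x z = Umz (Suc n) x z n * diag1 (Uprod n (shiftx x) z)"
proof -
  have "rev [1..<Suc n] = n # rev [1..<n]" using assms by simp
  then have "Uprod (Suc n) x z = Umz (Suc n) x z n * foldr (\<lambda>k M. Umz (Suc n) x z k * M) (rev [1..<n]) (diag1 (1\<^sub>m n))"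
    by (simp add: Uprod_def diag1_one)
  also have "foldr (\<lambda>k M. Umz (Suc n) x z k * M) (rev [1..<n]) (diag1 (1\<^sub>m n)) = diag1 (Uprod n (shiftx x) z)"
    unfolding Uprod_def by (rule foldr_diag1[of _ _ _ n]) (auto simp: Umz_shift)
  finally show ?thesis .
qed

definition Newton :: "nat \<Rightarrow> (nat \<Rightarrow> real) \<Rightarrow> real mat" where
  "Newton n x = mat n n (\<lambda>(i,j). \<Prod>s=1..j. (x (i+1) - x s) / (x (j+1) - x s))"

definition cL :: "(nat \<Rightarrow> real) \<Rightarrow> nat \<Rightarrow> real" where
  "cL x j = (\<Prod>s=1..j. (x (j+2) - x (s+1))) / (\<Prod>s=1..j. (x (j+1) - x s))"

lemma sum_two:
  fixes f :: "nat \<Rightarrow> real"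
  assumes "j < n" "\<And>l. l < n \<Longrightarrow> l \<noteq> j \<Longrightarrow> l \<noteq> Suc j \<Longrightarrow> f l = 0"
  shows "(\<Sum>l<n. f l) = f j + (if Suc j < n then f (Suc j) else 0)"
proof -
  let ?S = "{j} \<union> (if Suc j < n then {Suc j} else {})"
  have "(\<Sum>l<n. f l) = (\<Sum>l\<in>?S. f l)"
    using assms by (intro sum.mono_neutral_right) auto
  then show ?thesis by auto
qed

lemma prod_rev1:
  fixes g :: "nat \<Rightarrow> real"
  assumes "1 \<le> j"
  shows "(\<Prod>t=0..j-1. g (j - t)) = (\<Prod>s=1..j. g s)"
  using assms by (intro prod.reindex_bij_witness[where i="\<lambda>s. j - s" and j="\<lambda>t. j - t"]) auto

lemma Lmat_last_entry:
  assumes "i < Suc n" "j < Suc n"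
  shows "Lmat (Suc n) x n $$ (i,j) = (if i = j then 1 else if i = Suc j then cL x j else 0)"
proof -
  have "(\<Prod>t = 0..n + (j + 2) - (Suc n + 2). (x (j + 2) - x (j + 2 - 1 - t)) / (x (j + 2 - 1) - x (j + 2 - 2 - t)))
     = cL x j" if "j \<ge> 1"
  proof -
    have "(\<Prod>t = 0..n + (j + 2) - (Suc n + 2). (x (j + 2) - x (j + 2 - 1 - t)) / (x (j + 2 - 1) - x (j + 2 - 2 - t)))
       = (\<Prod>t=0..j-1. (\<lambda>s. (x (j+2) - x (s+1)) / (x (j+1) - x s)) (j - t))"
      using that by (intro prod.cong) (auto simp: Suc_diff_le)
    also have "\<dots> = (\<Prod>s=1..j. (x (j+2) - x (s+1)) / (x (j+1) - x s))"
      using that by (rule prod_rev1)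
    finally show ?thesis by (simp add: cL_def prod_dividef)
  qed
  then show ?thesis using assms
    by (auto simp: Lmat_def Let_def cL_def)
qed


lemma Newton_carrier[simp]: "Newton n x \<in> carrier_mat n n"
  by (simp add: Newton_def)

lemma Newton_dim[simp]: "dim_row (Newton n x) = n" "dim_col (Newton n x) = n"
  by (auto simp: Newton_def)

lemma Newton_split:
  assumes "Suc i' < Suc n" "Suc j' < Suc n"
  shows "Newton (Suc n) x $$ (Suc i', Suc j') =
    (x (i'+2) - x 1) / (x (j'+2) - x 1) * Newton n (shiftx x) $$ (i', j')"
proof -
  have "(\<Prod>s=1..Suc j'. (x (Suc i'+1) - x s) / (x (Suc j'+1) - x s)) =
     (x (i'+2) - x 1) / (x (j'+2) - x 1) * (\<Prod>s=Suc 1..Suc j'. (x (Suc i'+1) - x s) / (x (Suc j'+1) - x s))"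
    by (subst prod.atLeast_Suc_atMost) auto
  also have "(\<Prod>s=Suc 1..Suc j'. (x (Suc i'+1) - x s) / (x (Suc j'+1) - x s))
     = (\<Prod>s=1..j'. (shiftx x (i'+1) - shiftx x s) / (shiftx x (j'+1) - shiftx x s))"
    by (subst prod.shift_bounds_cl_Suc_ivl) (simp add: shiftx_def)
  finally show ?thesis using assms by (simp add: Newton_def)
qed

lemma Newton_step:
  assumes inj: "inj_on x {1..Suc n}" and n: "1 \<le> n"
  shows "diag1 (Newton n (shiftx x)) * Lmat (Suc n) x n = Newton (Suc n) x"
proof (rule eq_matI)
  fix i j assume "i < dim_row (Newton (Suc n) x)" "j < dim_col (Newton (Suc n) x)"
  then have ij: "i < Suc n" "j < Suc n" by (auto simp: Newton_def)
  let ?D = "diag1 (Newton n (shiftx x))"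
  have "(?D * Lmat (Suc n) x n) $$ (i,j) = (\<Sum>l<Suc n. ?D $$ (i,l) * Lmat (Suc n) x n $$ (l,j))"
    using ij by (intro mult_entry) auto
  also have "\<dots> = ?D $$ (i,j) * Lmat (Suc n) x n $$ (j,j) +
     (if Suc j < Suc n then ?D $$ (i,Suc j) * Lmat (Suc n) x n $$ (Suc j,j) else 0)"
    using ij by (intro sum_two) (auto simp: Lmat_last_entry)
  also have "\<dots> = ?D $$ (i,j) + (if Suc j < Suc n then ?D $$ (i,Suc j) * cL x j else 0)"
    using ij by (simp add: Lmat_last_entry)
  also have "\<dots> = Newton (Suc n) x $$ (i,j)"
  proof (cases i)
    case 0
    then show ?thesis using ij
      by (auto simp: diag1_def Newton_def)
  next
    case (Suc i')
    show ?thesis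
    proof (cases j)
      case 0
      then show ?thesis using ij n Suc by (auto simp: diag1_def Newton_def cL_def)
    next
      case (Suc j')
      let ?xi = "x (i'+2)" and ?xj = "x (j'+2)"
      define A where "A = (\<Prod>s=1..j'. (x (i'+2) - x (s+1)))"
      define B where "B = (\<Prod>s=1..j'. (x (j'+2) - x (s+1)))"
      define C where "C = (\<Prod>s=1..Suc j'. (x (Suc (Suc (Suc j'))) - x (s+1)))"
      have dist: "x a \<noteq> x b" if "a \<in> {1..Suc n}" "b \<in> {1..Suc n}" "a \<noteq> b" for a b
        using inj that by (meson inj_on_contraD)
      have "\<forall>s\<in>{1..j'}. x (j'+2) - x (s+1) \<noteq> 0"
      proof
        fix s assume "s \<in> {1..j'}"
        then show "x (j'+2) - x (s+1) \<noteq> 0" using dist[of "j'+2" "s+1"] ij \<open>j = Suc j'\<close> by auto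
      qed
      then have B0: "B \<noteq> 0" unfolding B_def by (simp add: prod_zero_iff)
      have x10: "?xj - x 1 \<noteq> 0" using ij \<open>j = Suc j'\<close> dist[of "j'+2" 1] by auto
      have N1: "Newton n (shiftx x) $$ (i', j') = A / B"
        using ij \<open>i = Suc i'\<close> \<open>j = Suc j'\<close>
        by (simp add: Newton_def A_def B_def shiftx_def prod_dividef)
      have T: "Newton (Suc n) x $$ (i,j) = (?xi - x 1) / (?xj - x 1) * (A / B)"
        using ij \<open>i = Suc i'\<close> \<open>j = Suc j'\<close> Newton_split[of i' n j' x] N1 by simp
      show ?thesis
      proof (cases "Suc j < Suc n")
        case True
        have "\<forall>s\<in>{1..Suc j'}. x (Suc (Suc (Suc j'))) - x (s+1) \<noteq> 0"
        proof
          fix s assume "s \<in> {1..Suc j'}"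
          then show "x (Suc (Suc (Suc j'))) - x (s+1) \<noteq> 0" using dist[of "Suc (Suc (Suc j'))" "s+1"] True \<open>j = Suc j'\<close> by auto
        qed
        then have C0: "C \<noteq> 0" unfolding C_def by (simp add: prod_zero_iff)
        have N2: "Newton n (shiftx x) $$ (i', Suc j') = A * (?xi - ?xj) / C"
          using ij True \<open>i = Suc i'\<close> \<open>j = Suc j'\<close>
          by (simp add: Newton_def A_def C_def shiftx_def prod_dividef)
        have "(\<Prod>s=1..Suc j'. (x (Suc j'+1) - x s)) = (?xj - x 1) * (\<Prod>s=Suc 1..Suc j'. (x (Suc j'+1) - x s))"
          by (subst prod.atLeast_Suc_atMost) auto
        also have "(\<Prod>s=Suc 1..Suc j'. (x (Suc j'+1) - x s)) = B"
          unfolding B_def by (subst prod.shift_bounds_cl_Suc_ivl) simp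
        finally have c: "cL x j = C / ((?xj - x 1) * B)"
          using \<open>j = Suc j'\<close> by (simp add: cL_def C_def)
        show ?thesis using True \<open>i = Suc i'\<close> \<open>j = Suc j'\<close> ij
          by (simp add: diag1_def N1 N2 c[unfolded \<open>j = Suc j'\<close>] T[unfolded \<open>i = Suc i'\<close> \<open>j = Suc j'\<close>]) (use B0 C0 x10 in \<open>simp add: field_simps\<close>)
      next
        case False
        then have jn: "j' + 1 = n" using ij \<open>j = Suc j'\<close> by simp
        have "A = 0 \<or> i' = j'"
        proof (cases "i' = j'")
          case False
          then have "i' < j'" using ij \<open>i = Suc i'\<close> jn by simp
          then show ?thesis unfolding A_def by (auto simp: prod_zero_iff intro!: bexI[of _ "i'+1"])
        qed simp
        then show ?thesis using False \<open>i = Suc i'\<close> \<open>j = Suc j'\<close> ij x10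
          by (auto simp: diag1_def N1 T[unfolded \<open>i = Suc i'\<close> \<open>j = Suc j'\<close>])
      qed
    qed
  qed
  finally show "(?D * Lmat (Suc n) x n) $$ (i, j) = Newton (Suc n) x $$ (i, j)" .
qed (auto simp: Newton_def Lmat_def)

lemma inj_shiftx: "inj_on x {1..Suc n} \<Longrightarrow> inj_on (shiftx x) {1..n}"
  unfolding inj_on_def shiftx_def by (metis Suc_inject atLeastAtMost_iff Suc_le_mono le_SucI)

lemma Lprod_Newton: "inj_on x {1..n} \<Longrightarrow> Lprod n x = Newton n x"
proof (induction n arbitrary: x)
  case 0
  then show ?case by (intro eq_matI) (auto simp: Lprod_def Newton_def)
next
  case (Suc n)
  show ?case
  proof (cases "n = 0")
    case True
    then show ?thesis by (intro eq_matI) (auto simp: Lprod_def Newton_def)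
  next
    case False
    then have "1 \<le> n" by simp
    then show ?thesis using Suc inj_shiftx[OF Suc.prems]
      by (simp add: Lprod_Suc Newton_step)
  qed
qed

fun hs :: "(nat \<Rightarrow> real) \<Rightarrow> nat \<Rightarrow> nat \<Rightarrow> real" where
  "hs z 0 l = 1"
| "hs z (Suc d) 0 = 0"
| "hs z (Suc d) (Suc l) = hs z (Suc d) l + z (Suc l) * hs z d (Suc l)"

definition Gmat :: "nat \<Rightarrow> (nat \<Rightarrow> real) \<Rightarrow> (nat \<Rightarrow> real) \<Rightarrow> real mat" where
  "Gmat n x z = mat n n (\<lambda>(i,j). (\<Prod>s=1..i. (x (i+1) - x s)) * (if i \<le> j then hs z (j-i) (i+1) else 0))"

lemma Gmat_dim[simp]: "dim_row (Gmat n x z) = n" "dim_col (Gmat n x z) = n"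
  by (auto simp: Gmat_def)

lemma Gmat_carrier[simp]: "Gmat n x z \<in> carrier_mat n n"
  by (simp add: Gmat_def)

definition cU :: "(nat \<Rightarrow> real) \<Rightarrow> (nat \<Rightarrow> real) \<Rightarrow> nat \<Rightarrow> real" where
  "cU x z i = z (i+1) * (\<Prod>s=1..i. (x (i+1) - x s)) / (\<Prod>s=1..i. (x (i+2) - x (s+1)))"

lemma prod_rev2:
  fixes g :: "nat \<Rightarrow> real"
  shows "(\<Prod>t=1..i. g (i + 1 - t)) = (\<Prod>s=1..i. g s)"
  by (intro prod.reindex_bij_witness[where i="\<lambda>s. i + 1 - s" and j="\<lambda>t. i + 1 - t"]) auto

lemma Umz_last_entry:
  assumes "i < Suc n" "j < Suc n"
  shows "Umz (Suc n) x z n $$ (i,j) = (if i = j then (if i = 0 then 1 else x (i+1) - x 1)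
      else if j = Suc i then cU x z i else 0)"
proof -
  have "z ((n + (i+1) + 1) - Suc n) * (\<Prod>t = 1..(n + (i+1)) - Suc n. (x (i+1) - x (i+1 - t)) / (x (i+1 + 1) - x (i+1 + 1 - t)))
     = cU x z i"
  proof -
    have "(\<Prod>t = 1..(n + (i+1)) - Suc n. (x (i+1) - x (i+1 - t)) / (x (i+1 + 1) - x (i+1 + 1 - t)))
       = (\<Prod>t=1..i. (\<lambda>s. (x (i+1) - x s) / (x (i+2) - x (s+1))) (i + 1 - t))"
      by (intro prod.cong) (auto simp: Suc_diff_le)
    also have "\<dots> = (\<Prod>s=1..i. (x (i+1) - x s) / (x (i+2) - x (s+1)))"
      by (rule prod_rev2)
    finally show ?thesis by (simp add: cU_def prod_dividef)
  qed
  then show ?thesis using assms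
    by (auto simp: Umz_def Let_def cU_def)
qed


lemma Gmat_step:
  assumes inj: "inj_on x {1..Suc n}" and n: "1 \<le> n"
  shows "Umz (Suc n) x z n * diag1 (Gmat n (shiftx x) z) = Gmat (Suc n) x z"
proof (rule eq_matI)
  fix i j assume "i < dim_row (Gmat (Suc n) x z)" "j < dim_col (Gmat (Suc n) x z)"
  then have ij: "i < Suc n" "j < Suc n" by auto
  let ?D = "diag1 (Gmat n (shiftx x) z)"
  let ?U = "Umz (Suc n) x z n"
  have "(?U * ?D) $$ (i,j) = (\<Sum>l<Suc n. ?U $$ (i,l) * ?D $$ (l,j))"
    using ij by (intro mult_entry) auto
  also have "\<dots> = ?U $$ (i,i) * ?D $$ (i,j) +
     (if Suc i < Suc n then ?U $$ (i,Suc i) * ?D $$ (Suc i,j) else 0)"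
    using ij by (intro sum_two) (auto simp: Umz_last_entry)
  also have "\<dots> = Gmat (Suc n) x z $$ (i,j)"
  proof (cases i)
    case 0
    show ?thesis
    proof (cases j)
      case 0
      then show ?thesis using ij n \<open>i = 0\<close> by (auto simp: diag1_def Gmat_def Umz_last_entry)
    next
      case (Suc j')
      then show ?thesis using ij n \<open>i = 0\<close> by (auto simp: diag1_def Gmat_def Umz_last_entry cU_def)
    qed
  next
    case (Suc i')
    have dist: "x a \<noteq> x b" if "a \<in> {1..Suc n}" "b \<in> {1..Suc n}" "a \<noteq> b" for a b
      using inj that by (meson inj_on_contraD)
    define A where "A = (\<Prod>s=1..i'. (x (i'+2) - x (s+1)))"
    define P where "P = (\<Prod>s=1..Suc i'. (x (i'+2) - x s))"
    have PA: "P = (x (i'+2) - x 1) * A"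
    proof -
      have "P = (x (i'+2) - x 1) * (\<Prod>s=Suc 1..Suc i'. (x (i'+2) - x s))"
        unfolding P_def by (subst prod.atLeast_Suc_atMost) auto
      also have "(\<Prod>s=Suc 1..Suc i'. (x (i'+2) - x s)) = A"
        unfolding A_def by (subst prod.shift_bounds_cl_Suc_ivl) simp
      finally show ?thesis .
    qed
    have Uii: "?U $$ (i,i) = x (i'+2) - x 1" using ij \<open>i = Suc i'\<close> by (simp add: Umz_last_entry)
    show ?thesis
    proof (cases j)
      case 0
      then show ?thesis using ij \<open>i = Suc i'\<close> by (auto simp: diag1_def Gmat_def)
    next
      case (Suc j')
      have D1: "?D $$ (i,j) = A * (if i' \<le> j' then hs z (j'-i') (i'+1) else 0)"
        using ij \<open>i = Suc i'\<close> \<open>j = Suc j'\<close> by (simp add: diag1_def Gmat_def A_def shiftx_def)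
      have T: "Gmat (Suc n) x z $$ (i,j) = P * (if i' \<le> j' then hs z (j'-i') (i'+2) else 0)"
        using ij \<open>i = Suc i'\<close> \<open>j = Suc j'\<close> by (simp add: Gmat_def P_def)
      have H: "(if i' \<le> j' then hs z (j'-i') (i'+1) else 0) + (if i' < j' then z (i'+2) * hs z (j'-i'-1) (i'+2) else 0)
         = (if i' \<le> j' then hs z (j'-i') (i'+2) else 0)"
      proof (cases "i' < j'")
        case True
        then obtain d where d: "j' - i' = Suc d" by (metis Suc_diff_Suc zero_less_diff)
        then have "j' - i' - 1 = d" by simp
        then show ?thesis using True d by (simp add: numeral_2_eq_2)
      next
        case False
        then show ?thesis by auto
      qed
      show ?thesis
      proof (cases "Suc i < Suc n")
        case True
        define Cc where "Cc = (\<Prod>s=1..Suc i'. (x (Suc i'+2) - x (s+1)))"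
        have "\<forall>s\<in>{1..Suc i'}. x (Suc i'+2) - x (s+1) \<noteq> 0"
        proof
          fix s assume "s \<in> {1..Suc i'}"
          then show "x (Suc i'+2) - x (s+1) \<noteq> 0" using dist[of "Suc i'+2" "s+1"] True \<open>i = Suc i'\<close> by auto
        qed
        then have C0: "Cc \<noteq> 0" unfolding Cc_def by (simp add: prod_zero_iff)
        have c: "cU x z i = z (i'+2) * P / Cc"
          using \<open>i = Suc i'\<close> by (simp add: cU_def P_def Cc_def)
        have D2: "?D $$ (Suc i,j) = Cc * (if Suc i' \<le> j' then hs z (j'-Suc i') (i'+2) else 0)"
          using ij True \<open>i = Suc i'\<close> \<open>j = Suc j'\<close> by (simp add: diag1_def Gmat_def Cc_def shiftx_def)
        have "?U $$ (i,i) * ?D $$ (i,j) + (if Suc i < Suc n then ?U $$ (i,Suc i) * ?D $$ (Suc i,j) else 0)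
          = P * ((if i' \<le> j' then hs z (j'-i') (i'+1) else 0) + (if i' < j' then z (i'+2) * hs z (j'-i'-1) (i'+2) else 0))"
          using True ij C0 by (simp add: Uii D1 D2 PA Umz_last_entry c) (simp add: field_simps)
        then show ?thesis using H T by simp
      next
        case False
        then have "j' \<le> i'" using ij \<open>i = Suc i'\<close> \<open>j = Suc j'\<close> by simp
        then have "\<not> i' < j'" by simp
        then show ?thesis using False H T by (simp add: Uii D1 PA)
      qed
    qed
  qed
  finally show "(?U * ?D) $$ (i, j) = Gmat (Suc n) x z $$ (i, j)" .
qed (auto simp: Umz_def)

lemma Uprod_Gmat: "inj_on x {1..n} \<Longrightarrow> Uprod n x z = Gmat n x z"
proof (induction n arbitrary: x)
  case 0
  then show ?case by (intro eq_matI) (auto simp: Uprod_def Gmat_def)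
next
  case (Suc n)
  show ?case
  proof (cases "n = 0")
    case True
    then show ?thesis by (intro eq_matI) (auto simp: Uprod_def Gmat_def)
  next
    case False
    then have "1 \<le> n" by simp
    then show ?thesis using Suc inj_shiftx[OF Suc.prems]
      by (simp add: Uprod_Suc Gmat_step)
  qed
qed

lemma newton_id:
  fixes t :: real
  shows "t ^ d = (\<Sum>l\<le>d. (\<Prod>s=1..l. (t - z s)) * hs z (d - l) (Suc l))"
proof (induction d)
  case 0
  then show ?case by simp
next
  case (Suc d)
  define Q where "Q l = (\<Prod>s=1..l. (t - z s))" for l
  have QS: "Q (Suc l) = Q l * (t - z (Suc l))" for l by (simp add: Q_def)
  define S1 where "S1 = (\<Sum>l\<le>d. Q (Suc l) * hs z (d - l) (Suc l))"
  define S2 where "S2 = (\<Sum>l\<le>d. z (Suc l) * Q l * hs z (d - l) (Suc l))"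
  define R where "R = (\<Sum>l\<le>d. Q l * hs z (Suc (d - l)) l)"
  have "t ^ Suc d = t * (\<Sum>l\<le>d. Q l * hs z (d - l) (Suc l))"
    using Suc by (simp add: Q_def)
  also have "\<dots> = (\<Sum>l\<le>d. Q (Suc l) * hs z (d - l) (Suc l) + z (Suc l) * Q l * hs z (d - l) (Suc l))"
    by (simp add: sum_distrib_left QS algebra_simps)
  also have "\<dots> = S1 + S2" by (simp add: S1_def S2_def sum.distrib)
  finally have L: "t ^ Suc d = S1 + S2" .
  have "(\<Sum>l\<le>Suc d. Q l * hs z (Suc d - l) (Suc l)) = (\<Sum>l\<le>d. Q l * hs z (Suc d - l) (Suc l)) + Q (Suc d)"
    by simp
  also have "(\<Sum>l\<le>d. Q l * hs z (Suc d - l) (Suc l)) = (\<Sum>l\<le>d. Q l * hs z (Suc (d - l)) l + z (Suc l) * Q l * hs z (d - l) (Suc l))"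
    by (intro sum.cong) (auto simp: Suc_diff_le algebra_simps)
  also have "\<dots> = R + S2" by (simp add: R_def S2_def sum.distrib)
  finally have Rt: "(\<Sum>l\<le>Suc d. Q l * hs z (Suc d - l) (Suc l)) = R + S2 + Q (Suc d)" .
  have "S1 = R + Q (Suc d)"
  proof (cases d)
    case 0
    then show ?thesis by (simp add: S1_def R_def)
  next
    case (Suc d')
    have "R = Q 0 * hs z (Suc d) 0 + (\<Sum>l\<le>d'. Q (Suc l) * hs z (Suc (d - Suc l)) (Suc l))"
      unfolding R_def Suc by (subst sum.atMost_Suc_shift) simp
    also have "\<dots> = (\<Sum>l\<le>d'. Q (Suc l) * hs z (d - l) (Suc l))"
    proof -
      have "Q 0 * hs z (Suc d) 0 = 0" by simp
      moreover have "(\<Sum>l\<le>d'. Q (Suc l) * hs z (Suc (d - Suc l)) (Suc l)) = (\<Sum>l\<le>d'. Q (Suc l) * hs z (d - l) (Suc l))"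
        using Suc by (intro sum.cong) (auto simp: Suc_diff_le)
      ultimately show ?thesis by simp
    qed
    finally show ?thesis unfolding S1_def Suc by simp
  qed
  then show ?case using L Rt by (simp add: Q_def)
qed

definition Vand :: "nat \<Rightarrow> (nat \<Rightarrow> real) \<Rightarrow> real mat" where
  "Vand n x = mat n n (\<lambda>(i,j). x (i+1) ^ j)"

lemma Newton_Gmat:
  assumes inj: "inj_on x {1..n}"
  shows "Newton n x * Gmat n x x = Vand n x"
proof (rule eq_matI)
  fix i j assume "i < dim_row (Vand n x)" "j < dim_col (Vand n x)"
  then have ij: "i < n" "j < n" by (auto simp: Vand_def)
  let ?t = "x (i+1)"
  have "(Newton n x * Gmat n x x) $$ (i,j) = (\<Sum>l<n. Newton n x $$ (i,l) * Gmat n x x $$ (l,j))"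
    using ij by (intro mult_entry) auto
  also have "\<dots> = (\<Sum>l<n. if l \<le> j then (\<Prod>s=1..l. (?t - x s)) * hs x (j - l) (Suc l) else 0)"
  proof (intro sum.cong refl)
    fix l assume l: "l \<in> {..<n}"
    have nz: "(\<Prod>s=1..l. (x (l+1) - x s)) \<noteq> 0"
    proof -
      have "\<forall>s\<in>{1..l}. x (l+1) - x s \<noteq> 0"
      proof
        fix s assume "s \<in> {1..l}"
        then show "x (l+1) - x s \<noteq> 0" using inj l by (auto dest: inj_onD)
      qed
      then show ?thesis by (simp add: prod_zero_iff)
    qed
    show "Newton n x $$ (i,l) * Gmat n x x $$ (l,j) =
      (if l \<le> j then (\<Prod>s=1..l. (?t - x s)) * hs x (j - l) (Suc l) else 0)"
      using ij l nz by (simp add: Newton_def Gmat_def prod_dividef)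
  qed
  also have "\<dots> = (\<Sum>l\<le>j. (\<Prod>s=1..l. (?t - x s)) * hs x (j - l) (Suc l))"
    using ij by (intro sum.mono_neutral_cong_right) auto
  also have "\<dots> = ?t ^ j" by (rule newton_id[symmetric])
  finally show "(Newton n x * Gmat n x x) $$ (i,j) = Vand n x $$ (i,j)" using ij by (simp add: Vand_def)
qed (auto simp: Vand_def)

lemma LU_prod_Vand: "inj_on x {1..n} \<Longrightarrow> LU_prod n x = Vand n x"
  by (simp add: LU_prod_split Lprod_Newton Uprod_Gmat Newton_Gmat)

theorem theorem2p4:
  fixes n m :: nat and x y :: "nat \<Rightarrow> real"
  assumes "n \<ge> 2" and "1 \<le> m" and "m \<le> n - 1"
    and "inj_on x {1..n}" and "inj_on y {1..n}"
  shows "Spow n m x y = LU_prod n x * Dmat n m * transpose_mat (LU_prod n y)"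
proof -
  have VD: "(Vand n x * Dmat n m) $$ (i,k) = x (i+1) ^ k * (if k \<le> m then real (m choose k) else 0)"
    if "i < n" "k < n" for i k
  proof -
    have "(Vand n x * Dmat n m) $$ (i,k) = (\<Sum>l<n. Vand n x $$ (i,l) * Dmat n m $$ (l,k))"
      using that by (intro mult_entry) (auto simp: Vand_def Dmat_def)
    also have "\<dots> = (\<Sum>l<n. if l = k then x (i+1) ^ k * (if k \<le> m then real (m choose k) else 0) else 0)"
      using that by (intro sum.cong) (auto simp: Vand_def Dmat_def)
    also have "\<dots> = x (i+1) ^ k * (if k \<le> m then real (m choose k) else 0)"
      using that by simp
    finally show ?thesis .
  qed
  have "Spow n m x y = Vand n x * Dmat n m * transpose_mat (Vand n y)"
  proof (rule eq_matI)
    fix i j assume "i < dim_row (Vand n x * Dmat n m * transpose_mat (Vand n y))"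
      "j < dim_col (Vand n x * Dmat n m * transpose_mat (Vand n y))"
    then have ij: "i < n" "j < n" by (auto simp: Vand_def)
    have VT: "transpose_mat (Vand n y) $$ (k,j) = y (j+1) ^ k" if "k < n" for k
      using that ij by (simp add: Vand_def)
    have "(Vand n x * Dmat n m * transpose_mat (Vand n y)) $$ (i,j)
       = (\<Sum>k<n. (Vand n x * Dmat n m) $$ (i,k) * transpose_mat (Vand n y) $$ (k,j))"
      using ij by (intro mult_entry[of _ n n]) (auto simp: Vand_def Dmat_def)
    also have "\<dots> = (\<Sum>k<n. if k \<le> m then real (m choose k) * (x (i+1) * y (j+1)) ^ k else 0)"
      using ij by (intro sum.cong) (auto simp: VD VT power_mult_distrib)
    also have "\<dots> = (\<Sum>k\<le>m. real (m choose k) * (x (i+1) * y (j+1)) ^ k)"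
      using ij assms by (intro sum.mono_neutral_cong_right) auto
    also have "\<dots> = (x (i+1) * y (j+1) + 1) ^ m"
      by (simp add: binomial_ring)
    finally show "Spow n m x y $$ (i,j) = (Vand n x * Dmat n m * transpose_mat (Vand n y)) $$ (i,j)"
      using ij by (simp add: Spow_def add.commute)
  qed (auto simp: Spow_def Vand_def)
  then show ?thesis using assms by (simp add: LU_prod_Vand)
qed

end
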